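(* Let $p=P\langle x\rangle\to_{\mathrm{ue}}P\langle v^{\alpha}\rangle=q$ with $P\in\mathcal{X}_{{\mathcal{U}},{\mathcal{A}}}$ and $P(x)=v$. Then there exist a program $r$ and a reduction sequence $d: q\to_{\mathrm{ue}}^{k}\to_{\mathrm{um}} r$ such that: (1) the evaluation context of each $\to_{\mathrm{ue}}$ step in $d$ is in $\mathcal{X}_{{\mathcal{U}},{\mathcal{A}}}$, and the one of the $\to_{\mathrm{um}}$ step is in $\mathcal{M}_{{\mathcal{U}},{\mathcal{A}}}$; (2) $k\geq 0$ is the number of rules (NA) in the derivation of $P\in\mathcal{X}_{{\mathcal{U}},{\mathcal{A}}}$.
   Context: Syntax. Terms $t,u,s ::= x\mid\lambda x.t\mid t\,u$; values $v ::= \lambda x.t$ (variables are not values); environments $E ::= \epsilon\mid E[x\leftarrow t]$; programs $p ::= (t,E)$; $x$ is bound in $E$ and $u$ in $(u,E[x\leftarrow t])$; up to $\alpha$; appended ES bind variables not in the domain of the program/context. Inert terms $i ::= x\mid i\,f$, fireballs $f ::= v\mid i$, non-variable inert terms $i^{+} ::= i\,f$. Contexts. Open term evaluation contexts $\mathcal{H} ::= \langle\cdot\rangle\mid\mathcal{H}\,t\mid i\,\mathcal{H}$; applicative term contexts $\mathcal{H}^{@} ::= \langle\cdot\rangle\,t\mid\mathcal{H}^{@}\,t\mid i\,\mathcal{H}^{@}$. Term contexts $C ::= \langle\cdot\rangle\mid C\,t\mid t\,C$; environment contexts $G ::= E[x\leftarrow C]\mid G[x\leftarrow u]$; program contexts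 $P ::= (C,E)\mid(t,G)$. Appending: $(t,E)@[x\leftarrow u]=(t,E[x\leftarrow u])$, $(C,E)@[x\leftarrow u]=(C,E[x\leftarrow u])$, $(t,G)@[x\leftarrow u]=(t,G[x\leftarrow u])$, and $(t,E)@[x\leftarrow C]:=(t,E[x\leftarrow C])$. Plugging: $(C,E)\langle(t,E')\rangle=(C\langle t\rangle,E'E)$; $(u,E[x\leftarrow C])\langle(t,E')\rangle=(u,E[x\leftarrow C\langle t\rangle]E')$; $(u,G[x\leftarrow s])\langle(t,E)\rangle=((u,G)\langle(t,E)\rangle)@[x\leftarrow s]$; $P\langle t\rangle:=P\langle(t,\epsilon)\rangle$. Look-up $P(x)=t$ if the ES list of $P$ contains $[x\leftarrow t]$ with $t$ a term, $\bot$ otherwise. $v^{\alpha}$: copy of $v$ with fresh bound variables. Variable sets. $an(\lambda x.t)=an(x)=\emptyset$; $an(tu)=\{x\}\cup an(u)$ if $t=x$ variable, else $an(t)\cup an(u)$; $an(\langle\cdot\rangle)=\emptyset$, $an(\mathcal{H}\,t)=an(\mathcal{H})$, $an(i\,\mathcal{H})=an(i)\cup an(\mathcal{H})$. $un(\lambda x.t)=\emptyset$, $un(x)=\{x\}$, $un(tu)=un(u)$ if $t$ variable, else $un(t)\cup un(u)$; $un(\langle\cdot\rangle)=\emptyset$, $un(\mathcal{H}\,t)=un(\mathcal{H})$, $un(i\,\mathcal{H})=un(i)\cup un(\mathcal{H})$. $\mathrm{upd}(S,x,y):=S$ if $x\notin S$, else $(S\setminus\{x\})\cup\{y\}$. Multiplicative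 contexts $P\in\mathcal{M}_{{\mathcal{U}},{\mathcal{A}}}$, inductively: (ax) $(\mathcal{H},\epsilon)\in\mathcal{M}_{un(\mathcal{H}),an(\mathcal{H})}$; (var) $P\in\mathcal{M}_{{\mathcal{U}},{\mathcal{A}}}$, $x\in{\mathcal{U}}\cup{\mathcal{A}}$ $\Rightarrow$ $P@[x\leftarrow y]\in\mathcal{M}_{\mathrm{upd}({\mathcal{U}},x,y),\mathrm{upd}({\mathcal{A}},x,y)}$; (gc) $x\notin{\mathcal{U}}\cup{\mathcal{A}}$ $\Rightarrow$ $P@[x\leftarrow t]\in\mathcal{M}_{{\mathcal{U}},{\mathcal{A}}}$; (I) $x\in{\mathcal{U}}\cup{\mathcal{A}}$ $\Rightarrow$ $P@[x\leftarrow i^{+}]\in\mathcal{M}_{({\mathcal{U}}\setminus\{x\})\cup un(i^{+}),({\mathcal{A}}\setminus\{x\})\cup an(i^{+})}$; (U) $x\in{\mathcal{U}}\setminus{\mathcal{A}}$ $\Rightarrow$ $P@[x\leftarrow v]\in\mathcal{M}_{{\mathcal{U}}\setminus\{x\},{\mathcal{A}}}$; (her) $x\notin{\mathcal{U}}\cup{\mathcal{A}}$ $\Rightarrow$ $P\langle x\rangle@[x\leftarrow\mathcal{H}]\in\mathcal{M}_{{\mathcal{U}}\cup un(\mathcal{H}),{\mathcal{A}}\cup an(\mathcal{H})}$ (each with premise $P\in\mathcal{M}_{{\mathcal{U}},{\mathcal{A}}}$). Exponential contexts $P\in\mathcal{X}_{{\mathcal{U}},{\mathcal{A}}}$, inductively: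 (ax1) $(\mathcal{H}^{@},\epsilon)\in\mathcal{X}_{un(\mathcal{H}^{@}),an(\mathcal{H}^{@})}$; (ax2) $P\in\mathcal{M}_{{\mathcal{U}},{\mathcal{A}}}$, $x\notin{\mathcal{U}}\cup{\mathcal{A}}$ $\Rightarrow$ $P\langle x\rangle@[x\leftarrow\mathcal{H}^{@}]\in\mathcal{X}_{({\mathcal{U}}\setminus\{x\})\cup un(\mathcal{H}^{@}),{\mathcal{A}}\cup an(\mathcal{H}^{@})}$; and, each with premise $P\in\mathcal{X}_{{\mathcal{U}},{\mathcal{A}}}$: (var) $x\in{\mathcal{U}}\cup{\mathcal{A}}$ $\Rightarrow$ $P@[x\leftarrow y]\in\mathcal{X}_{\mathrm{upd}({\mathcal{U}},x,y),\mathrm{upd}({\mathcal{A}},x,y)}$; (I) $x\in{\mathcal{U}}\cup{\mathcal{A}}$ $\Rightarrow$ $P@[x\leftarrow i^{+}]\in\mathcal{X}_{({\mathcal{U}}\setminus\{x\})\cup un(i^{+}),({\mathcal{A}}\setminus\{x\})\cup an(i^{+})}$; (gc) $x\notin{\mathcal{U}}\cup{\mathcal{A}}$ $\Rightarrow$ $P@[x\leftarrow t]\in\mathcal{X}_{{\mathcal{U}},{\mathcal{A}}}$; (U) $x\in{\mathcal{U}}\setminus{\mathcal{A}}$ $\Rightarrow$ $P@[x\leftarrow v]\in\mathcal{X}_{{\mathcal{U}}\setminus\{x\},{\mathcal{A}}}$; (NA) $x\notin{\mathcal{A}}$ $\Rightarrow$ $P\langle x\rangle@[x\leftarrow\langle\cdot\rangle]\in\mathcal{X}_{{\mathcal{U}}\setminus\{x\},{\mathcal{A}}}$.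 Useful Open CbNeed rules: $P\langle(\lambda x.t)u\rangle\to_{\mathrm{um}}P\langle(t,[x\leftarrow u])\rangle$ if $P\in\mathcal{M}_{{\mathcal{U}},{\mathcal{A}}}$ for some ${\mathcal{U}},{\mathcal{A}}$; $P\langle x\rangle\to_{\mathrm{ue}}P\langle v^{\alpha}\rangle$ if $P\in\mathcal{X}_{{\mathcal{U}},{\mathcal{A}}}$ for some ${\mathcal{U}},{\mathcal{A}}$ and $P(x)=v$. *)

theory Defs
  imports Main
begin

type_synonym var = nat

datatype tm = Var var | Lam var tm | App tm tm

(* Environments: E[x<-t] is  E @ [(x,t)]; the leftmost ES is the innermost one. *)
type_synonym env = "(var \<times> tm) list"
type_synonym prog = "tm \<times> env"

datatype ctx = Hole | CAppL ctx tm | CAppR tm ctx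

(* program contexts: PC C E = (C,E);  PG u E y C E2 = (u, E[y<-C]E2) *)
datatype pctx = PC ctx env | PG tm env var ctx env

fun cplug :: "ctx \<Rightarrow> tm \<Rightarrow> tm" where
  "cplug Hole t = t"
| "cplug (CAppL C s) t = App (cplug C t) s"
| "cplug (CAppR s C) t = App s (cplug C t)"

fun pplug :: "pctx \<Rightarrow> prog \<Rightarrow> prog" where
  "pplug (PC C E) (t, E') = (cplug C t, E' @ E)"
| "pplug (PG u E y C E2) (t, E') = (u, E @ [(y, cplug C t)] @ E' @ E2)"

fun papp :: "pctx \<Rightarrow> var \<Rightarrow> tm \<Rightarrow> pctx" where
  "papp (PC C E) x s = PC C (E @ [(x, s)])"
| "papp (PG u E y C E2) x s = PG u E y C (E2 @ [(x, s)])"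

definition capp :: "prog \<Rightarrow> var \<Rightarrow> ctx \<Rightarrow> pctx" where
  "capp p x C = PG (fst p) (snd p) x C []"

(* look-up in the ES list scoping over the hole (nearest binding first) *)
fun plookup :: "pctx \<Rightarrow> var \<Rightarrow> tm option" where
  "plookup (PC C E) x = map_of E x"
| "plookup (PG u E y C E2) x = map_of E2 x"

fun pdom :: "pctx \<Rightarrow> var set" where
  "pdom (PC C E) = fst ` set E"
| "pdom (PG u E y C E2) = fst ` set E \<union> {y} \<union> fst ` set E2"

fun is_val :: "tm \<Rightarrow> bool" where
  "is_val (Lam x t) = True"
| "is_val _ = False"

fun inert :: "tm \<Rightarrow> bool" where
  "inert (Var x) = True"
| "inert (Lam x t) = False"
| "inert (App t u) = (inert t \<and> (is_val u \<or> inert u))"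

definition inert_plus :: "tm \<Rightarrow> bool" where
  "inert_plus t \<longleftrightarrow> inert t \<and> (\<forall>x. t \<noteq> Var x)"

fun is_H :: "ctx \<Rightarrow> bool" where
  "is_H Hole = True"
| "is_H (CAppL C t) = is_H C"
| "is_H (CAppR i C) = (inert i \<and> is_H C)"

fun is_Hat :: "ctx \<Rightarrow> bool" where
  "is_Hat Hole = False"
| "is_Hat (CAppL C t) = (C = Hole \<or> is_Hat C)"
| "is_Hat (CAppR i C) = (inert i \<and> is_Hat C)"

fun an_tm :: "tm \<Rightarrow> var set" where
  "an_tm (Var x) = {}"
| "an_tm (Lam x t) = {}"
| "an_tm (App (Var x) u) = insert x (an_tm u)"
| "an_tm (App t u) = an_tm t \<union> an_tm u"

fun un_tm :: "tm \<Rightarrow> var set" where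
  "un_tm (Var x) = {x}"
| "un_tm (Lam x t) = {}"
| "un_tm (App (Var x) u) = un_tm u"
| "un_tm (App t u) = un_tm t \<union> un_tm u"

fun an_ctx :: "ctx \<Rightarrow> var set" where
  "an_ctx Hole = {}"
| "an_ctx (CAppL C t) = an_ctx C"
| "an_ctx (CAppR i C) = an_tm i \<union> an_ctx C"

fun un_ctx :: "ctx \<Rightarrow> var set" where
  "un_ctx Hole = {}"
| "un_ctx (CAppL C t) = un_ctx C"
| "un_ctx (CAppR i C) = un_tm i \<union> un_ctx C"

definition updS :: "var set \<Rightarrow> var \<Rightarrow> var \<Rightarrow> var set" where
  "updS S x y = (if x \<notin> S then S else (S - {x}) \<union> {y})"

(* appended ES bind variables not in the domain of the context: side condition x \<notin> pdom P *)
inductive Md :: "var set \<Rightarrow> var set \<Rightarrow> pctx \<Rightarrow> bool" where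
  ax: "is_H H \<Longrightarrow> Md (un_ctx H) (an_ctx H) (PC H [])"
| var: "Md U A P \<Longrightarrow> x \<in> U \<union> A \<Longrightarrow> x \<notin> pdom P \<Longrightarrow>
        Md (updS U x y) (updS A x y) (papp P x (Var y))"
| gc: "Md U A P \<Longrightarrow> x \<notin> U \<union> A \<Longrightarrow> x \<notin> pdom P \<Longrightarrow> Md U A (papp P x t)"
| I: "Md U A P \<Longrightarrow> inert_plus i \<Longrightarrow> x \<in> U \<union> A \<Longrightarrow> x \<notin> pdom P \<Longrightarrow>
        Md ((U - {x}) \<union> un_tm i) ((A - {x}) \<union> an_tm i) (papp P x i)"
| U: "Md U A P \<Longrightarrow> is_val v \<Longrightarrow> x \<in> U - A \<Longrightarrow> x \<notin> pdom P \<Longrightarrow>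
        Md (U - {x}) A (papp P x v)"
| her: "Md U A P \<Longrightarrow> is_H H \<Longrightarrow> x \<notin> U \<union> A \<Longrightarrow> x \<notin> pdom P \<Longrightarrow>
        Md (U \<union> un_ctx H) (A \<union> an_ctx H) (capp (pplug P (Var x, [])) x H)"

(* Xd U A P n : there is a derivation of P \<in> X_{U,A} using exactly n rules (NA) *)
inductive Xd :: "var set \<Rightarrow> var set \<Rightarrow> pctx \<Rightarrow> nat \<Rightarrow> bool" where
  ax1: "is_Hat H \<Longrightarrow> Xd (un_ctx H) (an_ctx H) (PC H []) 0"
| ax2: "Md U A P \<Longrightarrow> is_Hat H \<Longrightarrow> x \<notin> U \<union> A \<Longrightarrow> x \<notin> pdom P \<Longrightarrow>
        Xd ((U - {x}) \<union> un_ctx H) (A \<union> an_ctx H) (capp (pplug P (Var x, [])) x H) 0"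
| var: "Xd U A P n \<Longrightarrow> x \<in> U \<union> A \<Longrightarrow> x \<notin> pdom P \<Longrightarrow>
        Xd (updS U x y) (updS A x y) (papp P x (Var y)) n"
| I: "Xd U A P n \<Longrightarrow> inert_plus i \<Longrightarrow> x \<in> U \<union> A \<Longrightarrow> x \<notin> pdom P \<Longrightarrow>
        Xd ((U - {x}) \<union> un_tm i) ((A - {x}) \<union> an_tm i) (papp P x i) n"
| gc: "Xd U A P n \<Longrightarrow> x \<notin> U \<union> A \<Longrightarrow> x \<notin> pdom P \<Longrightarrow> Xd U A (papp P x t) n"
| U: "Xd U A P n \<Longrightarrow> is_val v \<Longrightarrow> x \<in> U - A \<Longrightarrow> x \<notin> pdom P \<Longrightarrow>
        Xd (U - {x}) A (papp P x v) n"
| NA: "Xd U A P n \<Longrightarrow> x \<notin> A \<Longrightarrow> x \<notin> pdom P \<Longrightarrow>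
        Xd (U - {x}) A (capp (pplug P (Var x, [])) x Hole) (Suc n)"

definition sw :: "var \<Rightarrow> var \<Rightarrow> var \<Rightarrow> var" where
  "sw a b c = (if c = a then b else if c = b then a else c)"

fun tswap :: "var \<Rightarrow> var \<Rightarrow> tm \<Rightarrow> tm" where
  "tswap a b (Var x) = Var (sw a b x)"
| "tswap a b (Lam x t) = Lam (sw a b x) (tswap a b t)"
| "tswap a b (App t u) = App (tswap a b t) (tswap a b u)"

fun fv :: "tm \<Rightarrow> var set" where
  "fv (Var x) = {x}"
| "fv (Lam x t) = fv t - {x}"
| "fv (App t u) = fv t \<union> fv u"

fun bv :: "tm \<Rightarrow> var set" where
  "bv (Var x) = {}"
| "bv (Lam x t) = insert x (bv t)"
| "bv (App t u) = bv t \<union> bv u"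

fun vars :: "tm \<Rightarrow> var set" where
  "vars (Var x) = {x}"
| "vars (Lam x t) = insert x (vars t)"
| "vars (App t u) = vars t \<union> vars u"

inductive alpha :: "tm \<Rightarrow> tm \<Rightarrow> bool" where
  "alpha (Var x) (Var x)"
| "alpha t t' \<Longrightarrow> alpha u u' \<Longrightarrow> alpha (App t u) (App t' u')"
| "alpha t s \<Longrightarrow> alpha (Lam x t) (Lam x s)"
| "x \<noteq> y \<Longrightarrow> x \<notin> fv s \<Longrightarrow> alpha t (tswap x y s) \<Longrightarrow> alpha (Lam x t) (Lam y s)"

definition prog_vars :: "prog \<Rightarrow> var set" where
  "prog_vars p = vars (fst p) \<union> (\<Union>(x, t) \<in> set (snd p). insert x (vars t))"

(* v' is a copy v^alpha of v whose bound variables are fresh w.r.t. the program p *)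
definition fresh_copy :: "tm \<Rightarrow> tm \<Rightarrow> prog \<Rightarrow> bool" where
  "fresh_copy v v' p \<longleftrightarrow> alpha v v' \<and> bv v' \<inter> prog_vars p = {}"

(* p = P<x> ->ue P<v^alpha> = q  with P(x) = v  (membership P \<in> X stated separately) *)
definition ue_at :: "pctx \<Rightarrow> prog \<Rightarrow> prog \<Rightarrow> bool" where
  "ue_at P p q \<longleftrightarrow> (\<exists>x v v'. p = pplug P (Var x, []) \<and> plookup P x = Some v \<and> is_val v
      \<and> fresh_copy v v' p \<and> q = pplug P (v', []))"

(* p = P<(\<lambda>x.t)u> ->um P<(t,[x<-u])> = r  (membership P \<in> M stated separately) *)
definition um_at :: "pctx \<Rightarrow> prog \<Rightarrow> prog \<Rightarrow> bool" where
  "um_at P p r \<longleftrightarrow> (\<exists>x t u. p = pplug P (App (Lam x t) u, []) \<and> x \<notin> pdom P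
      \<and> r = pplug P (t, [(x, u)]))"

end

theory Submission
  imports Defs
begin

section \<open>Swapping and alpha\<close>

lemma sw_sw[simp]: "sw a b (sw a b c) = c"
  by (simp add: sw_def)

lemma sw_inj: "(sw a b c = sw a b d) = (c = d)"
  by (auto simp add: sw_def)

lemma tswap_tswap[simp]: "tswap a b (tswap a b t) = t"
  by (induction t) auto

lemma size_tswap[simp]: "size (tswap a b t) = size t"
  by (induction t) auto

lemma fv_tswap: "fv (tswap a b t) = sw a b ` fv t"
proof (induction t)
  case (Lam x t)
  then show ?case by (auto simp: sw_inj)
qed auto

lemma sw_conj: "sw a b (sw x y c) = sw (sw a b x) (sw a b y) (sw a b c)"
  by (auto simp add: sw_def)

lemma tswap_conj: "tswap a b (tswap x y s) = tswap (sw a b x) (sw a b y) (tswap a b s)"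
  by (induction s) (simp_all add: sw_conj[of a b x y])

lemma alpha_eqvt: "alpha t s \<Longrightarrow> alpha (tswap a b t) (tswap a b s)"
proof (induction rule: alpha.induct)
  case (1 x)
  then show ?case by (auto intro: alpha.intros)
next
  case (2 t t' u u')
  then show ?case by (auto intro: alpha.intros)
next
  case (3 t s x)
  then show ?case by (auto intro: alpha.intros)
next
  case (4 x y s t)
  have "sw a b x \<noteq> sw a b y" using 4 by (simp add: sw_inj)
  moreover have "sw a b x \<notin> fv (tswap a b s)" using 4 by (auto simp: fv_tswap sw_inj)
  moreover have "alpha (tswap a b t) (tswap (sw a b x) (sw a b y) (tswap a b s))"
    using 4(4) tswap_conj[of a b x y s] by simp
  ultimately show ?case by (simp add: alpha.intros(4))
qed

lemma alpha_fv: "alpha t s \<Longrightarrow> fv t = fv s"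
proof (induction rule: alpha.induct)
  case (4 x y s t)
  have "fv t = sw x y ` fv s" using 4 by (simp add: fv_tswap)
  then show ?case using 4 by (auto simp: sw_def image_iff split: if_splits)
qed auto

lemma fv_sub_vars: "fv t \<subseteq> vars t"
  by (induction t) auto

lemma finite_vars: "finite (vars t)"
  by (induction t) auto

lemma fresh_exists_aux:
  "\<forall>t. size t < N \<longrightarrow> (\<exists>s. alpha t s \<and> bv s \<inter> S = {})" if "finite S"
proof (induction N)
  case 0
  then show ?case by simp
next
  case (Suc N)
  show ?case
  proof (intro allI impI)
    fix t :: tm assume sz: "size t < Suc N"
    show "\<exists>s. alpha t s \<and> bv s \<inter> S = {}"
    proof (cases t)
      case (Var x)
      then show ?thesis by (auto intro: alpha.intros)
    next
      case (App t1 t2)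
      have "size t1 < N" "size t2 < N" using sz App by auto
      then obtain s1 s2 where "alpha t1 s1" "bv s1 \<inter> S = {}" "alpha t2 s2" "bv s2 \<inter> S = {}"
        using Suc.IH by meson
      then show ?thesis using App by (auto intro!: exI[of _ "App s1 s2"] intro: alpha.intros)
    next
      case (Lam x t1)
      have fin: "finite (S \<union> vars t1 \<union> {x})" using that finite_vars by auto
      obtain y where y: "y \<notin> S \<union> vars t1 \<union> {x}"
        using ex_new_if_finite[OF infinite_UNIV_nat fin] by blast
      have "size (tswap x y t1) < N" using sz Lam by simp
      then obtain s where s: "alpha (tswap x y t1) s" "bv s \<inter> S = {}" using Suc.IH by blast
      have "fv s = fv (tswap x y t1)" using alpha_fv[OF s(1)] by simp
      also have "\<dots> = sw x y ` fv t1" by (simp add: fv_tswap)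
      finally have fs: "fv s = sw x y ` fv t1" .
      have "y \<notin> fv t1" using y fv_sub_vars[of t1] by blast
      then have "x \<notin> sw x y ` fv t1" by (auto simp: sw_def)
      then have xs: "x \<notin> fv s" using fs by simp
      have al: "alpha t1 (tswap x y s)" using alpha_eqvt[OF s(1), of x y] by simp
      have xy: "x \<noteq> y" using y by blast
      have "alpha (Lam x t1) (Lam y s)" using alpha.intros(4)[OF xy xs al] .
      moreover have "bv (Lam y s) \<inter> S = {}" using s(2) y by simp
      ultimately show ?thesis using Lam by blast
    qed
  qed
qed

lemma fresh_exists: "finite S \<Longrightarrow> \<exists>s. alpha t s \<and> bv s \<inter> S = {}"
  using fresh_exists_aux[of S "Suc (size t)"] by auto

lemma finite_prog_vars: "finite (prog_vars p)"
  by (auto simp: prog_vars_def finite_vars)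

lemma alpha_Lam: "alpha (Lam z b) w \<Longrightarrow> \<exists>z' b'. w = Lam z' b'"
  by (cases rule: alpha.cases) auto

section \<open>Contexts\<close>

fun papps :: "pctx \<Rightarrow> env \<Rightarrow> pctx" where
  "papps P [] = P"
| "papps P ((x, s) # es) = papps (papp P x s) es"

lemma pdom_papp[simp]: "pdom (papp P x s) = insert x (pdom P)"
  by (cases P) auto

lemma pdom_papps: "pdom (papps P es) = pdom P \<union> fst ` set es"
  by (induction es arbitrary: P) force+

lemma pplug_papp: "pplug (papp P x s) (t, []) = (fst (pplug P (t, [])), snd (pplug P (t, [])) @ [(x, s)])"
  by (cases P) auto

lemma pplug_papps: "pplug (papps P es) (t, []) = (fst (pplug P (t, [])), snd (pplug P (t, [])) @ es)"
  by (induction es arbitrary: P) (auto simp: pplug_papp)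

lemma pdom_pplug: "pdom P = fst ` set (snd (pplug P (t, [])))"
  by (cases P) auto

lemma pdom_capp[simp]: "pdom (capp p x C) = fst ` set (snd p) \<union> {x}"
  by (simp add: capp_def)

lemma prog_vars_dom: "fst ` set (snd p) \<subseteq> prog_vars p"
  by (auto simp: prog_vars_def)

lemma pdom_sub_vars: "pdom P \<subseteq> prog_vars (pplug P (t, []))"
  using pdom_pplug[of P t] prog_vars_dom by auto

lemma plookup_none: "x \<notin> pdom P \<Longrightarrow> plookup P x = None"
  by (cases P) (auto simp: map_of_eq_None_iff)

lemma plookup_papp_new: "x \<notin> pdom P \<Longrightarrow> plookup (papp P x s) x = Some s"
  by (cases P) (auto simp: map_add_def split: option.splits dest!: map_of_SomeD intro: rev_image_eqI)

lemma plookup_papp_some: "plookup P z = Some v \<Longrightarrow> plookup (papp P x s) z = Some v"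
  by (cases P) auto

lemma plookup_papps_some: "plookup P z = Some v \<Longrightarrow> plookup (papps P es) z = Some v"
  by (induction es arbitrary: P) (auto simp: plookup_papp_some)

lemma hat_split:
  "is_Hat H \<Longrightarrow> \<exists>H' t. is_H H' \<and> (\<forall>w. cplug H w = cplug H' (App w t))
     \<and> un_ctx H' = un_ctx H \<and> an_ctx H' = an_ctx H"
proof (induction H)
  case Hole
  then show ?case by simp
next
  case (CAppL C s)
  show ?case
  proof (cases "C = Hole")
    case True
    then show ?thesis by (auto intro!: exI[of _ Hole])
  next
    case False
    then obtain H' t where "is_H H'" "\<forall>w. cplug C w = cplug H' (App w t)"
      "un_ctx H' = un_ctx C" "an_ctx H' = an_ctx C" using CAppL by auto
    then show ?thesis by (auto intro!: exI[of _ "CAppL H' s"])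
  qed
next
  case (CAppR i C)
  then obtain H' t where h: "is_H H'" "\<forall>w. cplug C w = cplug H' (App w t)"
    "un_ctx H' = un_ctx C" "an_ctx H' = an_ctx C" by auto
  have "inert i" using CAppR.prems by simp
  then show ?case using h by (intro exI[of _ "CAppR i H'"] exI[of _ t]) auto
qed

section \<open>Extensions\<close>

inductive st :: "var set \<Rightarrow> var set \<Rightarrow> var \<Rightarrow> tm \<Rightarrow> var set \<Rightarrow> var set \<Rightarrow> bool" where
  stvar: "x \<in> U \<union> A \<Longrightarrow> st U A x (Var y) (updS U x y) (updS A x y)"
| stgc: "x \<notin> U \<union> A \<Longrightarrow> st U A x t U A"
| stI: "inert_plus i \<Longrightarrow> x \<in> U \<union> A \<Longrightarrow> st U A x i ((U - {x}) \<union> un_tm i) ((A - {x}) \<union> an_tm i)"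
| stU: "is_val v \<Longrightarrow> x \<in> U - A \<Longrightarrow> st U A x v (U - {x}) A"

inductive Ext :: "var set \<Rightarrow> var set \<Rightarrow> var set \<Rightarrow> env \<Rightarrow> var set \<Rightarrow> var set \<Rightarrow> bool" where
  enil: "Ext D U A [] U A"
| econs: "x \<notin> D \<Longrightarrow> st U A x s U' A' \<Longrightarrow> Ext (insert x D) U' A' es U2 A2 \<Longrightarrow>
          Ext D U A ((x, s) # es) U2 A2"

lemma Xd_st: "Xd U A P m \<Longrightarrow> x \<notin> pdom P \<Longrightarrow> st U A x s U' A' \<Longrightarrow> Xd U' A' (papp P x s) m"
  by (erule st.cases) (auto intro: Xd.intros)

lemma Md_st: "Md U A P \<Longrightarrow> x \<notin> pdom P \<Longrightarrow> st U A x s U' A' \<Longrightarrow> Md U' A' (papp P x s)"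
  by (erule st.cases) (auto intro: Md.intros)

lemma Xd_ext: "Ext D U A es U2 A2 \<Longrightarrow> D = pdom P \<Longrightarrow> Xd U A P m \<Longrightarrow> Xd U2 A2 (papps P es) m"
proof (induction arbitrary: P rule: Ext.induct)
  case (econs x D U A s U' A' es U2 A2)
  then show ?case using Xd_st[of U A P m x s U' A'] by auto
qed auto

lemma Md_ext: "Ext D U A es U2 A2 \<Longrightarrow> D = pdom P \<Longrightarrow> Md U A P \<Longrightarrow> Md U2 A2 (papps P es)"
proof (induction arbitrary: P rule: Ext.induct)
  case (econs x D U A s U' A' es U2 A2)
  then show ?case using Md_st[of U A P x s U' A'] by auto
qed auto

lemma base_case:
  assumes "Md U A Q0" "pdom Q0 = pdom P0"
    and "\<And>w. pplug P0 (w, []) = pplug Q0 (App w t, [])"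
    and "Ext (pdom P0) U A es U2 A2" "z \<notin> pdom (papps P0 es)"
  shows "\<exists>(Ps :: pctx list) (qs :: prog list) Q r.
           length Ps = 0 \<and> length qs = Suc 0 \<and> qs ! 0 = pplug (papps P0 es) (Lam z b, [])
         \<and> (\<forall>i<0. ue_at (Ps ! i) (qs ! i) (qs ! Suc i) \<and> (\<exists>m. Xd U2 A2 (Ps ! i) m))
         \<and> Md U2 A2 Q \<and> um_at Q (qs ! 0) r"
proof -
  let ?Q = "papps Q0 es"
  have md: "Md U2 A2 ?Q" using Md_ext[OF assms(4)] assms(1,2) by auto
  have eq: "pplug (papps P0 es) (Lam z b, []) = pplug ?Q (App (Lam z b) t, [])"
    using assms(3) by (simp add: pplug_papps)
  have "z \<notin> pdom ?Q" using assms(2,5) by (simp add: pdom_papps)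
  then have "um_at ?Q (pplug (papps P0 es) (Lam z b, [])) (pplug ?Q (b, [(z, t)]))"
    unfolding um_at_def eq by blast
  then show ?thesis using md
    by (intro exI[of _ "[]"] exI[of _ "[pplug (papps P0 es) (Lam z b, [])]"] exI[of _ ?Q] exI[of _ "pplug ?Q (b, [(z, t)])"]) auto
qed

lemma main:
  assumes "Xd U A P n"
  shows "\<And>es U2 A2 z b. Ext (pdom P) U A es U2 A2 \<Longrightarrow> z \<notin> pdom (papps P es) \<Longrightarrow>
         \<exists>(Ps :: pctx list) (qs :: prog list) Q r.
           length Ps = n \<and> length qs = Suc n \<and> qs ! 0 = pplug (papps P es) (Lam z b, [])
         \<and> (\<forall>i<n. ue_at (Ps ! i) (qs ! i) (qs ! Suc i) \<and> (\<exists>m. Xd U2 A2 (Ps ! i) m))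
         \<and> Md U2 A2 Q \<and> um_at Q (qs ! n) r"
  using assms
proof induction
  case (ax1 H)
  obtain H' t where h: "is_H H'" "\<forall>w. cplug H w = cplug H' (App w t)"
    "un_ctx H' = un_ctx H" "an_ctx H' = an_ctx H" using hat_split[OF ax1(1)] by blast
  have "Md (un_ctx H) (an_ctx H) (PC H' [])" using Md.ax[OF h(1)] h by simp
  then show ?case
    by (rule base_case[where t = t]) (use h ax1 in auto)
next
  case (ax2 U A P H x)
  obtain H' t where h: "is_H H'" "\<forall>w. cplug H w = cplug H' (App w t)"
    "un_ctx H' = un_ctx H" "an_ctx H' = an_ctx H" using hat_split[OF ax2(2)] by blast
  have "Md (U \<union> un_ctx H') (A \<union> an_ctx H') (capp (pplug P (Var x, [])) x H')"
    using Md.her[OF ax2(1) h(1) ax2(3,4)] .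
  moreover have "U - {x} = U" using ax2(3) by auto
  ultimately have "Md ((U - {x}) \<union> un_ctx H) (A \<union> an_ctx H) (capp (pplug P (Var x, [])) x H')"
    using h by simp
  then show ?case
    by (rule base_case[where t = t]) (use h ax2 in \<open>auto simp: capp_def\<close>)
next
  case (var U A P n x y)
  have "Ext (pdom P) U A ((x, Var y) # es) U2 A2"
    using var by (auto intro: Ext.intros st.intros)
  then show ?case using var.IH[of "(x, Var y) # es"] var.prems by auto
next
  case (I U A P n i x)
  have "Ext (pdom P) U A ((x, i) # es) U2 A2"
    using I by (auto intro: Ext.intros st.intros)
  then show ?case using I.IH[of "(x, i) # es"] I.prems by auto
next
  case (gc U A P n x t)
  have "Ext (pdom P) U A ((x, t) # es) U2 A2"
    using gc by (auto intro: Ext.intros st.intros)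
  then show ?case using gc.IH[of "(x, t) # es"] gc.prems by auto
next
  case (U U A P n v x)
  have "Ext (pdom P) U A ((x, v) # es) U2 A2"
    using U by (auto intro: Ext.intros st.intros)
  then show ?case using U.IH[of "(x, v) # es"] U.prems by auto
next
  case (NA U A P n y)
  let ?w = "Lam z b"
  let ?es1 = "(y, ?w) # es"
  let ?P1 = "papps P ?es1"
  let ?q0 = "pplug ?P1 (Var y, [])"
  have pdP': "pdom (capp (pplug P (Var y, [])) y Hole) = insert y (pdom P)"
    using pdom_pplug[of P "Var y"] by auto
  have q0eq: "pplug (papps (capp (pplug P (Var y, [])) y Hole) es) (?w, []) = ?q0"
    by (simp add: pplug_papps pplug_papp capp_def)
  have stp: "st U A y ?w (U - {y}) A"
  proof (cases "y \<in> U")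
    case True then show ?thesis using NA by (auto intro: stU)
  next
    case False
    then have "U - {y} = U" by auto
    then show ?thesis using False NA stgc[of y U A ?w] by auto
  qed
  have ext1: "Ext (pdom P) U A ?es1 U2 A2"
    using NA.prems(1) pdP' NA.hyps stp by (auto intro: econs)
  obtain w' where w': "alpha ?w w'" "bv w' \<inter> prog_vars ?q0 = {}"
    using fresh_exists[OF finite_prog_vars] by blast
  obtain z' b' where zb: "w' = Lam z' b'" using alpha_Lam[OF w'(1)] by blast
  have "z' \<notin> pdom ?P1" using w'(2) zb pdom_sub_vars[of ?P1 "Var y"] by auto
  then obtain Ps qs Q r where ih: "length Ps = n" "length qs = Suc n"
    "qs ! 0 = pplug ?P1 (Lam z' b', [])"
    "\<forall>i<n. ue_at (Ps ! i) (qs ! i) (qs ! Suc i) \<and> (\<exists>m. Xd U2 A2 (Ps ! i) m)"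
    "Md U2 A2 Q" "um_at Q (qs ! n) r"
    using NA.IH[OF ext1] by blast
  have lk: "plookup ?P1 y = Some ?w"
    using plookup_papps_some[OF plookup_papp_new[OF NA.hyps(3)]] by simp
  have ue0: "ue_at ?P1 ?q0 (qs ! 0)"
    unfolding ue_at_def fresh_copy_def
    by (rule exI[of _ y], rule exI[of _ ?w], rule exI[of _ w']) (use lk w' zb ih(3) in auto)
  have xd0: "Xd U2 A2 ?P1 n" using Xd_ext[OF ext1 refl NA.hyps(1)] .
  show ?case
  proof (intro exI[of _ "?P1 # Ps"] exI[of _ "?q0 # qs"] exI[of _ Q] exI[of _ r] conjI)
    show "\<forall>i<Suc n. ue_at ((?P1 # Ps) ! i) ((?q0 # qs) ! i) ((?q0 # qs) ! Suc i)
        \<and> (\<exists>m. Xd U2 A2 ((?P1 # Ps) ! i) m)"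
    proof (intro allI impI)
      fix i assume "i < Suc n"
      then show "ue_at ((?P1 # Ps) ! i) ((?q0 # qs) ! i) ((?q0 # qs) ! Suc i)
        \<and> (\<exists>m. Xd U2 A2 ((?P1 # Ps) ! i) m)"
        using ue0 xd0 ih(4) by (cases i) auto
    qed
  qed (use ih q0eq in auto)
qed

theorem mainTheorem6:
  assumes "Xd U A P n"
    and "ue_at P p q"
  shows "\<exists>(Ps :: pctx list) (qs :: prog list) Q r.
           length Ps = n \<and> length qs = Suc n \<and> qs ! 0 = q
         \<and> (\<forall>i<n. ue_at (Ps ! i) (qs ! i) (qs ! Suc i) \<and> (\<exists>m. Xd U A (Ps ! i) m))
         \<and> Md U A Q \<and> um_at Q (qs ! n) r"
proof -
  obtain x v v' where h: "p = pplug P (Var x, [])" "plookup P x = Some v" "is_val v"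
    "fresh_copy v v' p" "q = pplug P (v', [])"
    using assms(2) unfolding ue_at_def by blast
  obtain a c where "v = Lam a c" using h(3) by (cases v) auto
  then obtain z b where zb: "v' = Lam z b" using h(4) alpha_Lam unfolding fresh_copy_def by blast
  have "z \<notin> pdom P" using h(1,4) zb pdom_sub_vars[of P "Var x"]
    unfolding fresh_copy_def by auto
  then show ?thesis
    using main[OF assms(1) enil[of "pdom P" U A], of z b] h(5) zb by simp
qed

end
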